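(* Let $f:\mathbb{R}^d\to\mathbb{R}$ satisfy the Standing Assumptions with constants $0<\mu\le L$ and $M>0$, and let $\{x_t\},\{G_t\},\{r_t\}$ be generated by General Sharpened-BFGS from some $x_0$, assuming $\nabla f(x_t)\ne0$ for all $t$ considered. Define $\xi_0=1$ and $\xi_t=\exp\!\left(2M\sum_{i=0}^{t-1}r_i\right)$ for $t\ge1$. Then for all $t\ge0$, $$\nabla^2 f(x_t)\preceq G_t\preceq \xi_t\frac{L}{\mu}\nabla^2 f(x_t).$$
   Context: Standing Assumptions: $f$ is twice differentiable, $\mu$-strongly convex and has $L$-Lipschitz gradient (so $\mu I\preceq\nabla^2f(x)\preceq LI$), and $f$ is strongly self-concordant with constant $M>0$: for all $x,y,z,w\in\mathbb{R}^d$, $\nabla^2f(y)-\nabla^2f(x)\preceq M\|y-x\|_z\nabla^2f(w)$, where $\|h\|_z:=\sqrt{h^\top\nabla^2f(z)h}$. For symmetric positive definite $A,G$ and $u\ne0$, $\mathrm{BFGS}(A,G,u):=G-\frac{Guu^\top G}{u^\top Gu}+\frac{Auu^\top A}{u^\top Au}$, and $\bar u(A,G):=\arg\max_{u\in\{e_1,\dots,e_d\}}\frac{u^\top Gu}{u^\top Au}$ (ties broken arbitrarily). General Sharpened-BFGS: set $G_0=LI$; for $t=0,1,2,\dots$: $x_{t+1}=x_t-G_t^{-1}\nabla f(x_t)$; $s_t=x_{t+1}-x_t$; $J_t=\int_0^1\nabla^2f(x_t+\tau s_t)\,d\tau$; $\bar G_t=\mathrm{BFGS}(J_t,G_t,s_t)$;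 $r_t=\|s_t\|_{x_t}$; $\hat G_t=(1+Mr_t/2)^2\bar G_t$; $\bar u=\bar u(\nabla^2f(x_{t+1}),\hat G_t)$; $G_{t+1}=\mathrm{BFGS}(\nabla^2f(x_{t+1}),\hat G_t,\bar u)$. *)

theory Defs
  imports "HOL-Analysis.Analysis"
begin

definition loewner_le :: "real^'n^'n \<Rightarrow> real^'n^'n \<Rightarrow> bool" where
  "loewner_le A B \<longleftrightarrow> (\<forall>v. v \<bullet> (A *v v) \<le> v \<bullet> (B *v v))"

definition strongly_convex_with :: "real \<Rightarrow> (real^'n \<Rightarrow> real) \<Rightarrow> bool" where
  "strongly_convex_with \<mu> f \<longleftrightarrow> convex_on UNIV (\<lambda>x. f x - \<mu> / 2 * (norm x)\<^sup>2)"

definition local_norm :: "(real^'n \<Rightarrow> real^'n^'n) \<Rightarrow> real^'n \<Rightarrow> real^'n \<Rightarrow> real" where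
  "local_norm H z h = sqrt (h \<bullet> (H z *v h))"

definition strongly_self_concordant :: "real \<Rightarrow> (real^'n \<Rightarrow> real^'n^'n) \<Rightarrow> bool" where
  "strongly_self_concordant M H \<longleftrightarrow>
     (\<forall>x y z w. loewner_le (H y - H x) ((M * local_norm H z (y - x)) *\<^sub>R H w))"

definition outer :: "real^'n \<Rightarrow> real^'n \<Rightarrow> real^'n^'n" where
  "outer a b = (\<chi> i j. a $ i * b $ j)"

definition BFGS :: "real^'n^'n \<Rightarrow> real^'n^'n \<Rightarrow> real^'n \<Rightarrow> real^'n^'n" where
  "BFGS A G u = G - (1 / (u \<bullet> (G *v u))) *\<^sub>R outer (G *v u) (u v* G)
                  + (1 / (u \<bullet> (A *v u))) *\<^sub>R outer (A *v u) (u v* A)"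

definition greedy_index :: "real^'n^'n \<Rightarrow> real^'n^'n \<Rightarrow> 'n \<Rightarrow> bool" where
  "greedy_index A G i \<longleftrightarrow>
     (\<forall>j. (G $ j $ j) / (A $ j $ j) \<le> (G $ i $ i) / (A $ i $ i))"

end

theory Submission
  imports Defs
begin

lemma line_deriv:
  fixes f :: "real^'n \<Rightarrow> real" and g :: "real^'n \<Rightarrow> real^'n"
  assumes grad: "\<And>y. GDERIV f y :> g y"
  shows "((\<lambda>a. f (y + a *\<^sub>R v)) has_real_derivative (g (y + a *\<^sub>R v) \<bullet> v)) (at a)"
proof -
  have d1: "((\<lambda>a. y + a *\<^sub>R v) has_derivative (\<lambda>h. h *\<^sub>R v)) (at a)"
    by (auto intro!: derivative_eq_intros)
  have d2: "(f has_derivative (\<lambda>h. h \<bullet> g (y + a *\<^sub>R v))) (at (y + a *\<^sub>R v))"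
    using grad unfolding gderiv_def by blast
  have "((\<lambda>a. f (y + a *\<^sub>R v)) has_derivative (\<lambda>h. (h *\<^sub>R v) \<bullet> g (y + a *\<^sub>R v))) (at a)"
    using has_derivative_compose[OF d1 d2] by (simp add: o_def)
  moreover have "(\<lambda>h. (h *\<^sub>R v) \<bullet> g (y + a *\<^sub>R v)) = (*) (g (y + a *\<^sub>R v) \<bullet> v)"
    by (auto simp: fun_eq_iff inner_commute)
  ultimately show ?thesis unfolding has_field_derivative_def by simp
qed

lemma deriv_eps:
  fixes g :: "real^'n \<Rightarrow> real^'n" and H :: "real^'n \<Rightarrow> real^'n^'n"
  assumes hess: "\<And>y. (g has_derivative (\<lambda>h. H y *v h)) (at y)" and e: "e > 0"
  shows "\<exists>d>0. \<forall>h. norm h < d \<longrightarrow> norm (g (y + h) - g y - H y *v h) \<le> e * norm h"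
proof -
  from hess[of y, unfolded has_derivative_at_alt] e obtain d where
    d: "d > 0" "\<And>z. norm (z - y) < d \<Longrightarrow> norm (g z - g y - H y *v (z - y)) \<le> e * norm (z - y)"
    by blast
  show ?thesis
  proof (intro exI[of _ d] conjI allI impI)
    fix h :: "real^'n" assume "norm h < d"
    then show "norm (g (y + h) - g y - H y *v h) \<le> e * norm h" using d(2)[of "y + h"] by simp
  qed (fact d)
qed

lemma schwarz_part:
  fixes f :: "real^'n \<Rightarrow> real" and g :: "real^'n \<Rightarrow> real^'n" and H :: "real^'n \<Rightarrow> real^'n^'n"
  assumes grad: "\<And>y. GDERIV f y :> g y"
    and d: "\<forall>h. norm h < d \<longrightarrow> norm (g (y + h) - g y - H y *v h) \<le> e * norm h"
    and s: "s > 0" "s * (norm u + norm v) < d" and e: "e > 0"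
  shows "\<bar>(f (y + s *\<^sub>R v + s *\<^sub>R u) - f (y + s *\<^sub>R u) - f (y + s *\<^sub>R v) + f y) - s\<^sup>2 * (u \<bullet> (H y *v v))\<bar>
     \<le> s\<^sup>2 * (e * norm u * (norm v + 2 * norm u))"
proof -
  define \<psi> where "\<psi> a = f (y + s *\<^sub>R v + a *\<^sub>R u) - f (y + a *\<^sub>R u)" for a
  define \<psi>' where "\<psi>' a = g (y + s *\<^sub>R v + a *\<^sub>R u) \<bullet> u - g (y + a *\<^sub>R u) \<bullet> u" for a
  have der: "(\<psi> has_real_derivative \<psi>' a) (at a)" for a
    unfolding \<psi>_def \<psi>'_def
    by (intro DERIV_diff line_deriv[OF grad])
  obtain \<theta> where th: "0 < \<theta>" "\<theta> < s" "\<psi> s - \<psi> 0 = (s - 0) * \<psi>' \<theta>"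
    using MVT2[OF s(1), of \<psi> \<psi>'] der by blast
  have eqD: "\<psi> s - \<psi> 0 = f (y + s *\<^sub>R v + s *\<^sub>R u) - f (y + s *\<^sub>R u) - f (y + s *\<^sub>R v) + f y"
    unfolding \<psi>_def by simp
  define h1 where "h1 = s *\<^sub>R v + \<theta> *\<^sub>R u"
  define h2 where "h2 = \<theta> *\<^sub>R u"
  have nh1: "norm h1 \<le> s * norm v + s * norm u"
  proof -
    have "norm h1 \<le> norm (s *\<^sub>R v) + norm (\<theta> *\<^sub>R u)" unfolding h1_def by (rule norm_triangle_ineq)
    also have "\<dots> = s * norm v + \<theta> * norm u" using s th by simp
    also have "\<dots> \<le> s * norm v + s * norm u" using th by (intro add_left_mono mult_right_mono) auto
    finally show ?thesis .
  qed
  have nh2: "norm h2 \<le> s * norm u" unfolding h2_def using th by (simp add: mult_right_mono)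
  have "norm h1 < d" using nh1 s(2) by (simp add: algebra_simps)
  then have E1: "norm (g (y + h1) - g y - H y *v h1) \<le> e * norm h1" using d by blast
  have "s * norm u \<le> s * (norm u + norm v)" using s(1) by (simp add: mult_left_mono)
  then have "norm h2 < d" using nh2 s(2) by linarith
  then have E2: "norm (g (y + h2) - g y - H y *v h2) \<le> e * norm h2" using d by blast
  have Hlin: "H y *v h1 - H y *v h2 = s *\<^sub>R (H y *v v)"
    unfolding h1_def h2_def by (simp add: matrix_vector_right_distrib matrix_vector_mult_scaleR)
  have "\<psi>' \<theta> - s * (u \<bullet> (H y *v v)) = u \<bullet> ((g (y + h1) - g y - H y *v h1) - (g (y + h2) - g y - H y *v h2))"
  proof -
    have "u \<bullet> ((g (y + h1) - g y - H y *v h1) - (g (y + h2) - g y - H y *v h2))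
        = u \<bullet> (g (y + h1) - g (y + h2)) - u \<bullet> (H y *v h1 - H y *v h2)"
      by (simp only: inner_diff_right inner_add_right)
    also have "\<dots> = \<psi>' \<theta> - s * (u \<bullet> (H y *v v))"
    proof -
      have "u \<bullet> (H y *v h1 - H y *v h2) = s * (u \<bullet> (H y *v v))" unfolding Hlin by simp
      moreover have "u \<bullet> (g (y + h1) - g (y + h2)) = \<psi>' \<theta>"
        unfolding \<psi>'_def h1_def h2_def by (simp add: inner_diff_right inner_commute add.assoc)
      ultimately show ?thesis by simp
    qed
    finally show ?thesis by simp
  qed
  also have "\<bar>\<dots>\<bar> \<le> norm u * norm ((g (y + h1) - g y - H y *v h1) - (g (y + h2) - g y - H y *v h2))"
    by (rule Cauchy_Schwarz_ineq2)
  also have "\<dots> \<le> norm u * (e * norm h1 + e * norm h2)"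
    by (intro mult_left_mono order_trans[OF norm_triangle_ineq4] add_mono E1 E2) auto
  also have "\<dots> \<le> norm u * (e * (s * norm v + s * norm u) + e * (s * norm u))"
    using e nh1 nh2 by (intro mult_left_mono add_mono) auto
  finally have B: "\<bar>\<psi>' \<theta> - s * (u \<bullet> (H y *v v))\<bar> \<le> s * (e * norm u * (norm v + 2 * norm u))"
    by (simp add: algebra_simps)
  have "(f (y + s *\<^sub>R v + s *\<^sub>R u) - f (y + s *\<^sub>R u) - f (y + s *\<^sub>R v) + f y) - s\<^sup>2 * (u \<bullet> (H y *v v))
      = s * (\<psi>' \<theta> - s * (u \<bullet> (H y *v v)))"
    using eqD th(3) by (simp add: power2_eq_square right_diff_distrib)
  then show ?thesis using B s(1)
    by (simp add: abs_mult power2_eq_square mult.assoc)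
qed

lemma hess_sym:
  fixes f :: "real^'n \<Rightarrow> real" and g :: "real^'n \<Rightarrow> real^'n" and H :: "real^'n \<Rightarrow> real^'n^'n"
  assumes grad: "\<And>y. GDERIV f y :> g y"
    and hess: "\<And>y. (g has_derivative (\<lambda>h. H y *v h)) (at y)"
  shows "u \<bullet> (H y *v v) = v \<bullet> (H y *v u)"
proof -
  define C where "C = norm u * (norm v + 2 * norm u) + norm v * (norm u + 2 * norm v)"
  have C0: "C \<ge> 0" unfolding C_def by simp
  have key: "\<bar>u \<bullet> (H y *v v) - v \<bullet> (H y *v u)\<bar> \<le> e * C" if e: "e > 0" for e
  proof -
    obtain d where d: "d > 0" "\<forall>h. norm h < d \<longrightarrow> norm (g (y + h) - g y - H y *v h) \<le> e * norm h"
      using deriv_eps[OF hess e] by blast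
    define s where "s = d / (2 * (norm u + norm v + 1))"
    have npos: "norm u + norm v + 1 > 0" by (simp add: add_nonneg_pos)
    have s0: "s > 0" unfolding s_def using d(1) npos by simp
    have "s * (norm u + norm v) \<le> s * (norm u + norm v + 1)" using s0 by simp
    also have "\<dots> = d / 2" unfolding s_def using npos by (simp add: field_simps)
    also have "\<dots> < d" using d(1) by simp
    finally have sd: "s * (norm u + norm v) < d" .
    have sd': "s * (norm v + norm u) < d" using sd by (simp add: add.commute)
    have P1: "\<bar>(f (y + s *\<^sub>R v + s *\<^sub>R u) - f (y + s *\<^sub>R u) - f (y + s *\<^sub>R v) + f y) - s\<^sup>2 * (u \<bullet> (H y *v v))\<bar>
       \<le> s\<^sup>2 * (e * norm u * (norm v + 2 * norm u))"
      by (rule schwarz_part[where u=u and v=v and y=y and g=g and H=H and f=f, OF grad d(2) s0 sd e])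
    have P2: "\<bar>(f (y + s *\<^sub>R u + s *\<^sub>R v) - f (y + s *\<^sub>R v) - f (y + s *\<^sub>R u) + f y) - s\<^sup>2 * (v \<bullet> (H y *v u))\<bar>
       \<le> s\<^sup>2 * (e * norm v * (norm u + 2 * norm v))"
      by (rule schwarz_part[where u=v and v=u and y=y and g=g and H=H and f=f, OF grad d(2) s0 sd' e])
    have eq: "f (y + s *\<^sub>R u + s *\<^sub>R v) = f (y + s *\<^sub>R v + s *\<^sub>R u)" by (simp add: add_ac)
    have "s\<^sup>2 * \<bar>u \<bullet> (H y *v v) - v \<bullet> (H y *v u)\<bar> \<le> s\<^sup>2 * (e * C)"
    proof -
      define D where "D = f (y + s *\<^sub>R v + s *\<^sub>R u) - f (y + s *\<^sub>R u) - f (y + s *\<^sub>R v) + f y"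
      have Q1: "\<bar>D - s\<^sup>2 * (u \<bullet> (H y *v v))\<bar> \<le> s\<^sup>2 * (e * norm u * (norm v + 2 * norm u))"
        using P1 unfolding D_def .
      have Q2: "\<bar>D - s\<^sup>2 * (v \<bullet> (H y *v u))\<bar> \<le> s\<^sup>2 * (e * norm v * (norm u + 2 * norm v))"
        using P2 unfolding D_def eq by (simp add: algebra_simps)
      have "s\<^sup>2 * \<bar>u \<bullet> (H y *v v) - v \<bullet> (H y *v u)\<bar> = \<bar>s\<^sup>2 * (u \<bullet> (H y *v v)) - s\<^sup>2 * (v \<bullet> (H y *v u))\<bar>"
        by (simp add: abs_mult right_diff_distrib[symmetric])
      also have "\<dots> \<le> s\<^sup>2 * (e * norm u * (norm v + 2 * norm u)) + s\<^sup>2 * (e * norm v * (norm u + 2 * norm v))"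
        using Q1 Q2 by linarith
      also have "\<dots> = s\<^sup>2 * (e * C)" unfolding C_def by (simp add: algebra_simps)
      finally show ?thesis .
    qed
    then show ?thesis using s0 by simp
  qed
  have "\<bar>u \<bullet> (H y *v v) - v \<bullet> (H y *v u)\<bar> \<le> 0"
  proof (rule field_le_epsilon)
    fix e :: real assume e: "0 < e"
    have "\<bar>u \<bullet> (H y *v v) - v \<bullet> (H y *v u)\<bar> \<le> (e / (C + 1)) * C"
      using key[of "e / (C + 1)"] e C0 by (simp add: add_nonneg_pos)
    also have "\<dots> \<le> e" using e C0 by (simp add: field_simps)
    finally show "\<bar>u \<bullet> (H y *v v) - v \<bullet> (H y *v u)\<bar> \<le> 0 + e" by simp
  qed
  then show ?thesis by simp
qed

lemma eps_le:
  fixes a b c :: real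
  assumes "\<And>e. e > 0 \<Longrightarrow> a \<le> b + e * c" "c \<ge> 0"
  shows "a \<le> b"
proof (rule field_le_epsilon)
  fix e :: real assume e: "0 < e"
  have "a \<le> b + (e / (c + 1)) * c" using assms(1)[of "e / (c + 1)"] e assms(2) by (simp add: add_nonneg_pos)
  also have "\<dots> \<le> b + e" using e assms(2) by (simp add: field_simps)
  finally show "a \<le> b + e" .
qed

lemma hess_upper:
  fixes g :: "real^'n \<Rightarrow> real^'n" and H :: "real^'n \<Rightarrow> real^'n^'n"
  assumes hess: "\<And>y. (g has_derivative (\<lambda>h. H y *v h)) (at y)"
    and lip: "L-lipschitz_on UNIV g"
  shows "norm (H y *v v) \<le> L * norm v"
proof (rule eps_le)
  show "0 \<le> norm v" by simp
  fix e :: real assume e: "e > 0"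
  obtain d where d: "d > 0" "\<forall>h. norm h < d \<longrightarrow> norm (g (y + h) - g y - H y *v h) \<le> e * norm h"
    using deriv_eps[OF hess e] by blast
  define t where "t = d / (2 * (norm v + 1))"
  have t0: "t > 0" unfolding t_def using d(1) by (simp add: add_nonneg_pos)
  have "t * norm v \<le> t * (norm v + 1)" using t0 by simp
  also have "\<dots> = d / 2" unfolding t_def
    using add_nonneg_pos[OF norm_ge_zero[of v] zero_less_one] by (simp add: field_simps)
  also have "\<dots> < d" using d(1) by simp
  finally have "norm (t *\<^sub>R v) < d" using t0 by simp
  then have E: "norm (g (y + t *\<^sub>R v) - g y - H y *v (t *\<^sub>R v)) \<le> e * norm (t *\<^sub>R v)" using d(2) by blast
  have Lp: "norm (g (y + t *\<^sub>R v) - g y) \<le> L * norm (t *\<^sub>R v)"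
    using lipschitz_onD[OF lip, of "y + t *\<^sub>R v" y] by (simp add: dist_norm)
  have "t * norm (H y *v v) = norm (H y *v (t *\<^sub>R v))" using t0 by (simp add: matrix_vector_mult_scaleR)
  also have "\<dots> \<le> norm (g (y + t *\<^sub>R v) - g y) + norm (g (y + t *\<^sub>R v) - g y - H y *v (t *\<^sub>R v))"
    by (rule order_trans[OF _ norm_triangle_ineq4]) simp
  also have "\<dots> \<le> L * norm (t *\<^sub>R v) + e * norm (t *\<^sub>R v)" using Lp E by simp
  also have "\<dots> = t * (L * norm v + e * norm v)" using t0 by (simp add: algebra_simps)
  finally show "norm (H y *v v) \<le> L * norm v + e * norm v" using t0 by simp
qed

lemma hess_upper_qf:
  fixes g :: "real^'n \<Rightarrow> real^'n" and H :: "real^'n \<Rightarrow> real^'n^'n"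
  assumes hess: "\<And>y. (g has_derivative (\<lambda>h. H y *v h)) (at y)"
    and lip: "L-lipschitz_on UNIV g"
  shows "v \<bullet> (H y *v v) \<le> L * (norm v)\<^sup>2"
proof -
  have "v \<bullet> (H y *v v) \<le> norm v * norm (H y *v v)"
    using Cauchy_Schwarz_ineq2[of v "H y *v v"] by linarith
  also have "\<dots> \<le> norm v * (L * norm v)" by (intro mult_left_mono hess_upper[OF hess lip]) auto
  finally show ?thesis by (simp add: power2_eq_square algebra_simps)
qed

lemma grad_mono_line:
  fixes f :: "real^'n \<Rightarrow> real" and g :: "real^'n \<Rightarrow> real^'n"
  assumes grad: "\<And>y. GDERIV f y :> g y"
    and sconv: "strongly_convex_with \<mu> f" and t: "t > 0"
  shows "\<mu> * t * (v \<bullet> v) \<le> (g (y + t *\<^sub>R v) - g y) \<bullet> v"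
proof -
  define \<psi> where "\<psi> a = f (y + a *\<^sub>R v) - \<mu> / 2 * ((y \<bullet> y) + 2 * a * (y \<bullet> v) + a\<^sup>2 * (v \<bullet> v))" for a
  define \<psi>' where "\<psi>' a = g (y + a *\<^sub>R v) \<bullet> v - \<mu> / 2 * (2 * (y \<bullet> v) + 2 * a * (v \<bullet> v))" for a
  have psi_eq: "\<psi> a = f (y + a *\<^sub>R v) - \<mu> / 2 * (norm (y + a *\<^sub>R v))\<^sup>2" for a
    unfolding \<psi>_def power2_norm_eq_inner
    by (simp add: inner_add_left inner_add_right inner_commute power2_eq_square algebra_simps)
  have der: "(\<psi> has_real_derivative \<psi>' a) (at a)" for a
    unfolding \<psi>_def \<psi>'_def
    by (rule DERIV_diff[OF line_deriv[OF grad]]) (auto intro!: derivative_eq_intros)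
  have cv: "convex_on UNIV \<psi>"
  proof (rule convex_onI)
    fix s a b :: real assume s: "0 < s" "s < 1"
    have "y + ((1 - s) *\<^sub>R a + s *\<^sub>R b) *\<^sub>R v = (1 - s) *\<^sub>R (y + a *\<^sub>R v) + s *\<^sub>R (y + b *\<^sub>R v)"
      by (simp add: algebra_simps)
    then show "\<psi> ((1 - s) *\<^sub>R a + s *\<^sub>R b) \<le> (1 - s) * \<psi> a + s * \<psi> b"
      unfolding psi_eq using convex_onD[OF sconv[unfolded strongly_convex_with_def], of s "y + a *\<^sub>R v" "y + b *\<^sub>R v"] s
      by simp
  qed simp
  have T1: "\<psi> t - \<psi> 0 \<ge> \<psi>' 0 * (t - 0)"
    by (rule convex_on_imp_above_tangent[OF cv]) (auto intro: der)
  have T2: "\<psi> 0 - \<psi> t \<ge> \<psi>' t * (0 - t)"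
    by (rule convex_on_imp_above_tangent[OF cv]) (auto intro: der)
  have "t * (\<psi>' t - \<psi>' 0) \<ge> 0" using T1 T2 by (simp add: algebra_simps)
  then have "\<psi>' t - \<psi>' 0 \<ge> 0" using t by (simp add: zero_le_mult_iff)
  then show ?thesis unfolding \<psi>'_def by (simp add: inner_diff_left algebra_simps)
qed

lemma hess_lower:
  fixes f :: "real^'n \<Rightarrow> real" and g :: "real^'n \<Rightarrow> real^'n" and H :: "real^'n \<Rightarrow> real^'n^'n"
  assumes grad: "\<And>y. GDERIV f y :> g y"
    and hess: "\<And>y. (g has_derivative (\<lambda>h. H y *v h)) (at y)"
    and sconv: "strongly_convex_with \<mu> f"
  shows "\<mu> * (norm v)\<^sup>2 \<le> v \<bullet> (H y *v v)"
proof (rule eps_le)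
  show "0 \<le> (norm v)\<^sup>2" by simp
  fix e :: real assume e: "e > 0"
  obtain d where d: "d > 0" "\<forall>h. norm h < d \<longrightarrow> norm (g (y + h) - g y - H y *v h) \<le> e * norm h"
    using deriv_eps[OF hess e] by blast
  define t where "t = d / (2 * (norm v + 1))"
  have t0: "t > 0" unfolding t_def using d(1) by (simp add: add_nonneg_pos)
  have "t * norm v \<le> t * (norm v + 1)" using t0 by simp
  also have "\<dots> = d / 2" unfolding t_def
    using add_nonneg_pos[OF norm_ge_zero[of v] zero_less_one] by (simp add: field_simps)
  also have "\<dots> < d" using d(1) by simp
  finally have "norm (t *\<^sub>R v) < d" using t0 by simp
  then have E: "norm (g (y + t *\<^sub>R v) - g y - H y *v (t *\<^sub>R v)) \<le> e * norm (t *\<^sub>R v)" using d(2) by blast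
  have M: "\<mu> * t * (v \<bullet> v) \<le> (g (y + t *\<^sub>R v) - g y) \<bullet> v" by (rule grad_mono_line[OF grad sconv t0])
  have "(g (y + t *\<^sub>R v) - g y) \<bullet> v - t * (v \<bullet> (H y *v v)) = (g (y + t *\<^sub>R v) - g y - H y *v (t *\<^sub>R v)) \<bullet> v"
    by (simp add: inner_diff_left matrix_vector_mult_scaleR inner_commute inner_diff_right)
  also have "\<dots> \<le> norm (g (y + t *\<^sub>R v) - g y - H y *v (t *\<^sub>R v)) * norm v"
    using Cauchy_Schwarz_ineq2[of "g (y + t *\<^sub>R v) - g y - H y *v (t *\<^sub>R v)" v] by linarith
  also have "\<dots> \<le> e * norm (t *\<^sub>R v) * norm v" using E by (simp add: mult_right_mono)
  also have "\<dots> = t * (e * (norm v)\<^sup>2)" using t0 by (simp add: power2_eq_square)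
  finally have "\<mu> * t * (v \<bullet> v) \<le> t * (v \<bullet> (H y *v v)) + t * (e * (norm v)\<^sup>2)" using M by linarith
  then have "t * (\<mu> * (norm v)\<^sup>2) \<le> t * (v \<bullet> (H y *v v) + e * (norm v)\<^sup>2)"
    by (simp add: power2_norm_eq_inner algebra_simps)
  then show "\<mu> * (norm v)\<^sup>2 \<le> v \<bullet> (H y *v v) + e * (norm v)\<^sup>2" using t0 by simp
qed

lemma sym_inner:
  fixes A :: "real^'n^'n"
  assumes "transpose A = A"
  shows "x \<bullet> (A *v y) = y \<bullet> (A *v x)"
proof -
  have "x \<bullet> (A *v y) = (x v* A) \<bullet> y" by (simp add: dot_lmul_matrix)
  also have "x v* A = transpose A *v x" by simp
  also have "\<dots> = A *v x" using assms by simp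
  finally show ?thesis by (simp add: inner_commute)
qed

lemma outer_mv: "outer a b *v w = (b \<bullet> w) *\<^sub>R (a :: real^'n)"
proof -
  have "(\<Sum>j\<in>UNIV. a $ i * (b $ j * w $ j)) = (\<Sum>j\<in>UNIV. b $ j * w $ j) * a $ i" for i
    by (simp add: sum_distrib_left[symmetric] mult.commute)
  then show ?thesis
    by (simp add: vec_eq_iff outer_def matrix_vector_mult_def inner_vec_def mult.assoc)
qed

lemma BFGS_mv:
  fixes A G :: "real^'n^'n"
  shows "BFGS A G u *v v = G *v v - (1 / (u \<bullet> (G *v u))) *\<^sub>R ((u \<bullet> (G *v v)) *\<^sub>R (G *v u))
     + (1 / (u \<bullet> (A *v u))) *\<^sub>R ((u \<bullet> (A *v v)) *\<^sub>R (A *v u))"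
  unfolding BFGS_def
  by (simp add: matrix_vector_mult_add_rdistrib matrix_vector_mult_diff_rdistrib
      scaleR_matrix_vector_assoc[symmetric] outer_mv dot_lmul_matrix)

lemma BFGS_qf:
  fixes A G :: "real^'n^'n"
  assumes "transpose A = A" "transpose G = G"
  shows "v \<bullet> (BFGS A G u *v v) = v \<bullet> (G *v v) - (v \<bullet> (G *v u))\<^sup>2 / (u \<bullet> (G *v u))
     + (v \<bullet> (A *v u))\<^sup>2 / (u \<bullet> (A *v u))"
  unfolding BFGS_mv using sym_inner[OF assms(1), of u v] sym_inner[OF assms(2), of u v]
  by (simp add: inner_add_right inner_diff_right power2_eq_square)

lemma transpose_outer: "transpose (outer a b) = outer b (a :: real^'n)"
  by (simp add: vec_eq_iff outer_def transpose_def)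

lemma transpose_add: "transpose (A + B) = transpose A + transpose (B :: real^'n^'n)"
  by (simp add: vec_eq_iff transpose_def)

lemma transpose_diff: "transpose (A - B) = transpose A - transpose (B :: real^'n^'n)"
  by (simp add: vec_eq_iff transpose_def)

lemma BFGS_sym:
  fixes A G :: "real^'n^'n"
  assumes "transpose A = A" "transpose G = G"
  shows "transpose (BFGS A G u) = BFGS A G u"
proof -
  have "u v* A = transpose A *v u" by simp
  then have a: "u v* A = A *v u" using assms(1) by simp
  have "u v* G = transpose G *v u" by simp
  then have g: "u v* G = G *v u" using assms(2) by simp
  show ?thesis unfolding BFGS_def a g
    by (simp add: transpose_add transpose_diff transpose_scalar transpose_outer assms)
qed

definition Pf :: "real^'n^'n \<Rightarrow> real^'n \<Rightarrow> real^'n \<Rightarrow> real" where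
  "Pf G u v = v \<bullet> (G *v v) - (v \<bullet> (G *v u))\<^sup>2 / (u \<bullet> (G *v u))"

lemma Pf_expand:
  fixes G :: "real^'n^'n"
  assumes "transpose G = G" "u \<bullet> (G *v u) > 0"
  shows "(v - a *\<^sub>R u) \<bullet> (G *v (v - a *\<^sub>R u)) = Pf G u v + (v \<bullet> (G *v u) - a * (u \<bullet> (G *v u)))\<^sup>2 / (u \<bullet> (G *v u))"
proof -
  have s: "u \<bullet> (G *v v) = v \<bullet> (G *v u)" by (rule sym_inner[OF assms(1)])
  have "(v - a *\<^sub>R u) \<bullet> (G *v (v - a *\<^sub>R u)) = v \<bullet> (G *v v) - 2 * a * (v \<bullet> (G *v u)) + a\<^sup>2 * (u \<bullet> (G *v u))"
    using s by (simp add: matrix_vector_right_distrib matrix_vector_mult_diff_distrib matrix_vector_mult_scaleR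
        inner_diff_left inner_diff_right power2_eq_square algebra_simps)
  moreover have "w - 2 * a * p + a\<^sup>2 * q = (w - p\<^sup>2 / q) + (p - a * q)\<^sup>2 / q" if "q > 0" for w p q :: real
    using that by (simp add: field_simps power2_eq_square)
  ultimately show ?thesis unfolding Pf_def using assms(2) by simp
qed

lemma Pf_le:
  fixes G :: "real^'n^'n"
  assumes "transpose G = G" "u \<bullet> (G *v u) > 0"
  shows "Pf G u v \<le> (v - a *\<^sub>R u) \<bullet> (G *v (v - a *\<^sub>R u))"
  unfolding Pf_expand[OF assms] using assms(2) by simp

lemma Pf_eq:
  fixes G :: "real^'n^'n"
  assumes "transpose G = G" "u \<bullet> (G *v u) > 0"
  shows "Pf G u v = (v - ((v \<bullet> (G *v u)) / (u \<bullet> (G *v u))) *\<^sub>R u) \<bullet> (G *v (v - ((v \<bullet> (G *v u)) / (u \<bullet> (G *v u))) *\<^sub>R u))"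
  unfolding Pf_expand[OF assms] using assms(2) by simp

lemma BFGS_bounds:
  fixes A G :: "real^'n^'n"
  assumes sA: "transpose A = A" and sG: "transpose G = G"
    and pA: "u \<bullet> (A *v u) > 0" and pG: "u \<bullet> (G *v u) > 0"
    and xi: "\<xi> \<ge> 1" and eta: "\<eta> \<ge> 1"
    and lo: "\<And>v. v \<bullet> (A *v v) \<le> \<xi> * (v \<bullet> (G *v v))"
    and up: "\<And>v. v \<bullet> (G *v v) \<le> \<eta> * (v \<bullet> (A *v v))"
  shows "v \<bullet> (A *v v) \<le> \<xi> * (v \<bullet> (BFGS A G u *v v))"
    and "v \<bullet> (BFGS A G u *v v) \<le> \<eta> * (v \<bullet> (A *v v))"
proof -
  define Q where "Q = (v \<bullet> (A *v u))\<^sup>2 / (u \<bullet> (A *v u))"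
  have Q0: "Q \<ge> 0" unfolding Q_def using pA by simp
  have qB: "v \<bullet> (BFGS A G u *v v) = Pf G u v + Q"
    unfolding BFGS_qf[OF sA sG] Pf_def Q_def by simp
  have qA: "v \<bullet> (A *v v) = Pf A u v + Q" unfolding Pf_def Q_def by simp
  define aG where "aG = (v \<bullet> (G *v u)) / (u \<bullet> (G *v u))"
  define aA where "aA = (v \<bullet> (A *v u)) / (u \<bullet> (A *v u))"
  have "Pf A u v \<le> \<xi> * Pf G u v"
  proof -
    have "Pf A u v \<le> (v - aG *\<^sub>R u) \<bullet> (A *v (v - aG *\<^sub>R u))" by (rule Pf_le[OF sA pA])
    also have "\<dots> \<le> \<xi> * ((v - aG *\<^sub>R u) \<bullet> (G *v (v - aG *\<^sub>R u)))" by (rule lo)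
    also have "\<dots> = \<xi> * Pf G u v" unfolding aG_def Pf_eq[OF sG pG, of v] ..
    finally show ?thesis .
  qed
  then show "v \<bullet> (A *v v) \<le> \<xi> * (v \<bullet> (BFGS A G u *v v))"
    unfolding qA qB using Q0 xi mult_right_mono[of 1 \<xi> Q] by (simp add: distrib_left)
  have "Pf G u v \<le> \<eta> * Pf A u v"
  proof -
    have "Pf G u v \<le> (v - aA *\<^sub>R u) \<bullet> (G *v (v - aA *\<^sub>R u))" by (rule Pf_le[OF sG pG])
    also have "\<dots> \<le> \<eta> * ((v - aA *\<^sub>R u) \<bullet> (A *v (v - aA *\<^sub>R u)))" by (rule up)
    also have "\<dots> = \<eta> * Pf A u v" unfolding aA_def Pf_eq[OF sA pA, of v] ..
    finally show ?thesis .
  qed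
  then show "v \<bullet> (BFGS A G u *v v) \<le> \<eta> * (v \<bullet> (A *v v))"
    unfolding qA qB using Q0 eta mult_right_mono[of 1 \<eta> Q] by (simp add: distrib_left)
qed

lemma entry_axis: "axis i 1 \<bullet> ((A :: real^'n^'n) *v axis j 1) = A $ i $ j"
  by (simp add: matrix_vector_mult_basis inner_axis' column_def)

lemma hess_transpose:
  fixes f :: "real^'n \<Rightarrow> real" and g :: "real^'n \<Rightarrow> real^'n" and H :: "real^'n \<Rightarrow> real^'n^'n"
  assumes grad: "\<And>y. GDERIV f y :> g y"
    and hess: "\<And>y. (g has_derivative (\<lambda>h. H y *v h)) (at y)"
  shows "transpose (H y) = H y"
proof -
  have "H y $ i $ j = H y $ j $ i" for i j
    using hess_sym[OF grad hess, of "axis i 1" y "axis j 1"] by (simp add: entry_axis)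
  then show ?thesis by (simp add: vec_eq_iff transpose_def)
qed

lemma ssc_inst:
  assumes ssc: "strongly_self_concordant M H"
  shows "w \<bullet> (H y *v w) - w \<bullet> (H x *v w) \<le> M * local_norm H z (y - x) * (w \<bullet> (H w' *v w))"
proof -
  have "loewner_le (H y - H x) ((M * local_norm H z (y - x)) *\<^sub>R H w')"
    using ssc unfolding strongly_self_concordant_def by blast
  then have "w \<bullet> ((H y - H x) *v w) \<le> w \<bullet> (((M * local_norm H z (y - x)) *\<^sub>R H w') *v w)"
    unfolding loewner_le_def by blast
  then show ?thesis
    by (simp add: matrix_vector_mult_diff_rdistrib scaleR_matrix_vector_assoc[symmetric] inner_diff_right)
qed

lemma ln_scale: "local_norm H z (a *\<^sub>R s) = \<bar>a\<bar> * local_norm H z s"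
proof -
  have "(a *\<^sub>R s) \<bullet> (H z *v (a *\<^sub>R s)) = a\<^sup>2 * (s \<bullet> (H z *v s))"
    by (simp add: matrix_vector_mult_scaleR power2_eq_square)
  then show ?thesis unfolding local_norm_def by (simp add: real_sqrt_mult)
qed

lemma polar:
  fixes A :: "real^'n^'n"
  assumes "transpose A = A"
  shows "A $ i $ j = ((axis i 1 + axis j 1) \<bullet> (A *v (axis i 1 + axis j 1))
     - (axis i 1 - axis j 1) \<bullet> (A *v (axis i 1 - axis j 1))) / 4"
proof -
  have s: "axis j 1 \<bullet> (A *v axis i 1) = axis i 1 \<bullet> (A *v axis j 1)" by (rule sym_inner[OF assms])
  show ?thesis using s
    by (simp add: matrix_vector_right_distrib matrix_vector_mult_diff_distrib inner_add_left inner_add_right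
        inner_diff_left inner_diff_right entry_axis)
qed

lemma qf_seg_lip:
  fixes H :: "real^'n \<Rightarrow> real^'n^'n"
  assumes ssc: "strongly_self_concordant M H" and M: "M \<ge> 0"
    and psd: "\<And>y v. 0 \<le> v \<bullet> (H y *v v)"
  shows "(M * local_norm H x0 s * (w \<bullet> (H x0 *v w)))-lipschitz_on S (\<lambda>\<tau>. w \<bullet> (H (x0 + \<tau> *\<^sub>R s) *v w))"
proof (rule lipschitz_onI)
  have r0: "local_norm H x0 s \<ge> 0" unfolding local_norm_def using psd by simp
  show "0 \<le> M * local_norm H x0 s * (w \<bullet> (H x0 *v w))" using M r0 psd by simp
  fix a b :: real
  have d: "(x0 + a *\<^sub>R s) - (x0 + b *\<^sub>R s) = (a - b) *\<^sub>R s" "(x0 + b *\<^sub>R s) - (x0 + a *\<^sub>R s) = (b - a) *\<^sub>R s"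
    by (simp_all add: algebra_simps)
  have 1: "w \<bullet> (H (x0 + a *\<^sub>R s) *v w) - w \<bullet> (H (x0 + b *\<^sub>R s) *v w) \<le> M * (\<bar>a - b\<bar> * local_norm H x0 s) * (w \<bullet> (H x0 *v w))"
    using ssc_inst[OF ssc, of w "x0 + a *\<^sub>R s" "x0 + b *\<^sub>R s" x0 x0] unfolding d ln_scale .
  have 2: "w \<bullet> (H (x0 + b *\<^sub>R s) *v w) - w \<bullet> (H (x0 + a *\<^sub>R s) *v w) \<le> M * (\<bar>b - a\<bar> * local_norm H x0 s) * (w \<bullet> (H x0 *v w))"
    using ssc_inst[OF ssc, of w "x0 + b *\<^sub>R s" "x0 + a *\<^sub>R s" x0 x0] unfolding d ln_scale .
  show "dist (w \<bullet> (H (x0 + a *\<^sub>R s) *v w)) (w \<bullet> (H (x0 + b *\<^sub>R s) *v w)) \<le> M * local_norm H x0 s * (w \<bullet> (H x0 *v w)) * dist a b"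
    using 1 2 by (simp add: dist_real_def abs_minus_commute algebra_simps abs_le_iff)
qed

lemma seg_cont:
  fixes H :: "real^'n \<Rightarrow> real^'n^'n"
  assumes ssc: "strongly_self_concordant M H" and M: "M \<ge> 0"
    and psd: "\<And>y v. 0 \<le> v \<bullet> (H y *v v)" and symH: "\<And>y. transpose (H y) = H y"
  shows "continuous_on S (\<lambda>\<tau>. H (x0 + \<tau> *\<^sub>R s))"
proof -
  have qc: "continuous_on S (\<lambda>\<tau>. w \<bullet> (H (x0 + \<tau> *\<^sub>R s) *v w))" for w
    by (rule lipschitz_on_continuous_on[OF qf_seg_lip[OF ssc M psd]])
  have ec: "continuous_on S (\<lambda>\<tau>. H (x0 + \<tau> *\<^sub>R s) $ i $ j)" for i j
    unfolding polar[OF symH]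
    by (rule continuous_on_divide[OF continuous_on_diff[OF qc qc] continuous_on_const]) simp
  have eq: "(\<lambda>\<tau>. H (x0 + \<tau> *\<^sub>R s)) = (\<lambda>\<tau>. \<chi> i. \<chi> j. H (x0 + \<tau> *\<^sub>R s) $ i $ j)" by simp
  have "continuous_on S (\<lambda>\<tau>. \<chi> i. \<chi> j. H (x0 + \<tau> *\<^sub>R s) $ i $ j)" by (intro continuous_on_vec_lambda ec)
  then show ?thesis by (subst eq)
qed

lemma lin_has_int: "((\<lambda>\<tau>::real. \<alpha> + \<beta> * \<tau>) has_integral (\<alpha> + \<beta> / 2)) {0..1}"
proof -
  have "((\<lambda>\<tau>::real. \<alpha> + \<beta> * \<tau>) has_integral ((\<lambda>\<tau>. \<alpha> * \<tau> + \<beta> * \<tau>\<^sup>2 / 2) 1 - (\<lambda>\<tau>. \<alpha> * \<tau> + \<beta> * \<tau>\<^sup>2 / 2) 0)) {0..1}"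
  proof (rule fundamental_theorem_of_calculus)
    fix x :: real
    have "((\<lambda>\<tau>. \<alpha> * \<tau> + \<beta> * \<tau>\<^sup>2 / 2) has_real_derivative (\<alpha> + \<beta> * x)) (at x within {0..1})"
      by (auto intro!: derivative_eq_intros simp: power2_eq_square)
    then show "((\<lambda>\<tau>. \<alpha> * \<tau> + \<beta> * \<tau>\<^sup>2 / 2) has_vector_derivative (\<alpha> + \<beta> * x)) (at x within {0..1})"
      by (simp add: has_real_derivative_iff_has_vector_derivative)
  qed simp
  then show ?thesis by simp
qed

lemma bl_qf: "bounded_linear (\<lambda>A::real^'n^'n. v \<bullet> (A *v v))"
proof -
  have "linear (\<lambda>A::real^'n^'n. v \<bullet> (A *v v))"
    by (rule linearI) (simp_all add: matrix_vector_mult_add_rdistrib scaleR_matrix_vector_assoc[symmetric] inner_add_right)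
  then show ?thesis using linear_conv_bounded_linear by blast
qed

lemma bl_transpose: "bounded_linear (transpose :: real^'n^'n \<Rightarrow> real^'n^'n)"
proof -
  have "linear (transpose :: real^'n^'n \<Rightarrow> real^'n^'n)"
    by (rule linearI) (simp_all add: transpose_add transpose_scalar)
  then show ?thesis using linear_conv_bounded_linear by blast
qed

lemma J_facts:
  fixes H :: "real^'n \<Rightarrow> real^'n^'n"
  assumes ssc: "strongly_self_concordant M H" and M: "M \<ge> 0"
    and psd: "\<And>y v. 0 \<le> v \<bullet> (H y *v v)" and symH: "\<And>y. transpose (H y) = H y"
  shows "v \<bullet> (integral {0..1} (\<lambda>\<tau>. H (x0 + \<tau> *\<^sub>R s)) *v v) = integral {0..1} (\<lambda>\<tau>. v \<bullet> (H (x0 + \<tau> *\<^sub>R s) *v v))"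
    and "transpose (integral {0..1} (\<lambda>\<tau>. H (x0 + \<tau> *\<^sub>R s))) = integral {0..1} (\<lambda>\<tau>. H (x0 + \<tau> *\<^sub>R s))"
    and "(\<lambda>\<tau>. v \<bullet> (H (x0 + \<tau> *\<^sub>R s) *v v)) integrable_on {0..1}"
proof -
  have int: "(\<lambda>\<tau>. H (x0 + \<tau> *\<^sub>R s)) integrable_on {0..1::real}"
    by (rule integrable_continuous_interval[OF seg_cont[OF ssc M psd symH]])
  show "v \<bullet> (integral {0..1} (\<lambda>\<tau>. H (x0 + \<tau> *\<^sub>R s)) *v v) = integral {0..1} (\<lambda>\<tau>. v \<bullet> (H (x0 + \<tau> *\<^sub>R s) *v v))"
    using integral_linear[OF int bl_qf[of v]] by (simp add: o_def)
  show "transpose (integral {0..1} (\<lambda>\<tau>. H (x0 + \<tau> *\<^sub>R s))) = integral {0..1} (\<lambda>\<tau>. H (x0 + \<tau> *\<^sub>R s))"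
    using integral_linear[OF int bl_transpose] by (simp add: o_def symH)
  show "(\<lambda>\<tau>. v \<bullet> (H (x0 + \<tau> *\<^sub>R s) *v v)) integrable_on {0..1}"
    using integrable_linear[OF int bl_qf[of v]] by (simp add: o_def)
qed

lemma int_lin_le:
  fixes q :: "real \<Rightarrow> real"
  assumes "q integrable_on {0..1}" "\<And>\<tau>. \<tau> \<in> {0..1} \<Longrightarrow> q \<tau> \<le> \<alpha> + \<beta> * \<tau>"
  shows "integral {0..1} q \<le> \<alpha> + \<beta> / 2"
proof -
  have "integral {0..1} q \<le> integral {0..1} (\<lambda>\<tau>::real. \<alpha> + \<beta> * \<tau>)"
    by (rule integral_le[OF assms(1) has_integral_integrable[OF lin_has_int] assms(2)])
  also have "\<dots> = \<alpha> + \<beta> / 2" by (rule integral_unique[OF lin_has_int])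
  finally show ?thesis .
qed

lemma int_lin_ge:
  fixes q :: "real \<Rightarrow> real"
  assumes "q integrable_on {0..1}" "\<And>\<tau>. \<tau> \<in> {0..1} \<Longrightarrow> \<alpha> + \<beta> * \<tau> \<le> q \<tau>"
  shows "\<alpha> + \<beta> / 2 \<le> integral {0..1} q"
proof -
  have "integral {0..1} (\<lambda>\<tau>::real. \<alpha> + \<beta> * \<tau>) \<le> integral {0..1} q"
    by (rule integral_le[OF has_integral_integrable[OF lin_has_int] assms(1) assms(2)])
  moreover have "integral {0..1} (\<lambda>\<tau>::real. \<alpha> + \<beta> * \<tau>) = \<alpha> + \<beta> / 2" by (rule integral_unique[OF lin_has_int])
  ultimately show ?thesis by simp
qed

lemma tangent_trick:
  fixes a c k p q0 qt :: real
  assumes "c = 1 + a / 2" "a \<ge> 0" "k \<ge> 0" "qt \<ge> 0" "q0 \<le> p * qt" "p * k \<le> c\<^sup>2"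
  shows "q0 * k / c\<^sup>2 \<le> qt"
proof -
  have c0: "c\<^sup>2 > 0" using assms(1,2) by simp
  have "q0 * k \<le> (p * qt) * k" by (rule mult_right_mono[OF assms(5) assms(3)])
  also have "\<dots> = (p * k) * qt" by simp
  also have "\<dots> \<le> c\<^sup>2 * qt" by (rule mult_right_mono[OF assms(6) assms(4)])
  finally show ?thesis using c0 by (simp add: divide_le_eq mult.commute)
qed

lemma seg_bounds:
  fixes H :: "real^'n \<Rightarrow> real^'n^'n"
  fixes x0 s v :: "real^'n" and M :: real
  assumes ssc: "strongly_self_concordant M H" and M: "M \<ge> 0"
    and psd: "\<And>y v. 0 \<le> v \<bullet> (H y *v v)" and symH: "\<And>y. transpose (H y) = H y"
  defines "J \<equiv> integral {0..1} (\<lambda>\<tau>. H (x0 + \<tau> *\<^sub>R s))"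
    and "c \<equiv> 1 + M * local_norm H x0 s / 2"
  shows "v \<bullet> (J *v v) \<le> c * (v \<bullet> (H x0 *v v))"
    and "v \<bullet> (H x0 *v v) \<le> c * (v \<bullet> (J *v v))"
    and "v \<bullet> (J *v v) \<le> c * (v \<bullet> (H (x0 + s) *v v))"
    and "v \<bullet> (H (x0 + s) *v v) \<le> c * (v \<bullet> (J *v v))"
proof -
  define r where "r = local_norm H x0 s"
  define a where "a = M * r"
  have r0: "r \<ge> 0" unfolding r_def local_norm_def using psd by simp
  have a0: "a \<ge> 0" unfolding a_def using r0 M by simp
  have ca: "c = 1 + a / 2" unfolding c_def a_def r_def by simp
  have c0: "c > 0" using ca a0 by simp
  define q where "q \<tau> = v \<bullet> (H (x0 + \<tau> *\<^sub>R s) *v v)" for \<tau>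
  define q0 where "q0 = v \<bullet> (H x0 *v v)"
  define q1 where "q1 = v \<bullet> (H (x0 + s) *v v)"
  have Q: "v \<bullet> (J *v v) = integral {0..1} q" unfolding J_def q_def by (rule J_facts(1)[OF ssc M psd symH])
  have qint: "q integrable_on {0..1}" unfolding q_def by (rule J_facts(3)[OF ssc M psd symH])
  have qpos: "q \<tau> \<ge> 0" for \<tau> unfolding q_def by (rule psd)
  have q0pos: "q0 \<ge> 0" "q1 \<ge> 0" unfolding q0_def q1_def by (rule psd)+
  have dif: "(x0 + \<tau> *\<^sub>R s) - x0 = \<tau> *\<^sub>R s" "x0 - (x0 + \<tau> *\<^sub>R s) = (- \<tau>) *\<^sub>R s"
     "(x0 + \<tau> *\<^sub>R s) - (x0 + s) = (\<tau> - 1) *\<^sub>R s" "(x0 + s) - (x0 + \<tau> *\<^sub>R s) = (1 - \<tau>) *\<^sub>R s" for \<tau>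
    by (simp_all add: algebra_simps)
  have "integral {0..1} q \<le> q0 + (a * q0) / 2"
  proof (rule int_lin_le[OF qint])
    fix \<tau> :: real assume t: "\<tau> \<in> {0..1}"
    have "q \<tau> - q0 \<le> M * local_norm H x0 (\<tau> *\<^sub>R s) * q0"
      unfolding q_def q0_def using ssc_inst[OF ssc, of v "x0 + \<tau> *\<^sub>R s" x0 x0 x0] by (simp only: dif)
    then show "q \<tau> \<le> q0 + a * q0 * \<tau>" using t unfolding ln_scale a_def r_def by (simp add: algebra_simps)
  qed
  then show "v \<bullet> (J *v v) \<le> c * (v \<bullet> (H x0 *v v))" unfolding Q ca q0_def[symmetric] by (simp add: algebra_simps)
  have "q0 * (c + a / 2) / c\<^sup>2 + (- (a * q0 / c\<^sup>2)) / 2 \<le> integral {0..1} q"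
  proof (rule int_lin_ge[OF qint])
    fix \<tau> :: real assume t: "\<tau> \<in> {0..1}"
    have "q0 - q \<tau> \<le> M * local_norm H x0 ((- \<tau>) *\<^sub>R s) * q \<tau>"
      unfolding q_def q0_def using ssc_inst[OF ssc, of v x0 "x0 + \<tau> *\<^sub>R s" x0 "x0 + \<tau> *\<^sub>R s"] by (simp only: dif)
    then have h: "q0 \<le> (1 + a * \<tau>) * q \<tau>" using t unfolding ln_scale a_def r_def by (simp add: algebra_simps)
    define k where "k = c - a * (\<tau> - 1/2)"
    have "\<tau> * a \<le> 1 * a" using t a0 by (intro mult_right_mono) auto
    then have k0: "k \<ge> 0" unfolding k_def ca using t a0 by (simp add: algebra_simps)
    have "c\<^sup>2 - (1 + a * \<tau>) * k = (a * (\<tau> - 1/2))\<^sup>2" unfolding k_def ca by (simp add: power2_eq_square algebra_simps)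
    then have "(1 + a * \<tau>) * k \<le> c\<^sup>2" by (smt (verit) zero_le_power2)
    from tangent_trick[OF ca a0 k0 qpos h this] have "q0 * k / c\<^sup>2 \<le> q \<tau>" .
    moreover have "q0 * k / c\<^sup>2 = q0 * (c + a / 2) / c\<^sup>2 + - (a * q0 / c\<^sup>2) * \<tau>"
      unfolding k_def using c0 by (simp add: field_simps)
    ultimately show "q0 * (c + a / 2) / c\<^sup>2 + - (a * q0 / c\<^sup>2) * \<tau> \<le> q \<tau>" by simp
  qed
  moreover have "q0 * (c + a / 2) / c\<^sup>2 + (- (a * q0 / c\<^sup>2)) / 2 = q0 / c" using c0 by (simp add: field_simps power2_eq_square)
  ultimately have "q0 / c \<le> integral {0..1} q" by simp
  then show "v \<bullet> (H x0 *v v) \<le> c * (v \<bullet> (J *v v))" unfolding Q q0_def[symmetric] using c0 by (simp add: divide_le_eq mult.commute)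
  have "integral {0..1} q \<le> (q1 + a * q1) + (- (a * q1)) / 2"
  proof (rule int_lin_le[OF qint])
    fix \<tau> :: real assume t: "\<tau> \<in> {0..1}"
    have "q \<tau> - q1 \<le> M * local_norm H x0 ((\<tau> - 1) *\<^sub>R s) * q1"
      unfolding q_def q1_def using ssc_inst[OF ssc, of v "x0 + \<tau> *\<^sub>R s" "x0 + s" x0 "x0 + s"] by (simp only: dif)
    moreover have "\<bar>\<tau> - 1\<bar> = 1 - \<tau>" using t by simp
    ultimately show "q \<tau> \<le> (q1 + a * q1) + - (a * q1) * \<tau>" unfolding ln_scale a_def r_def by (simp add: algebra_simps)
  qed
  then show "v \<bullet> (J *v v) \<le> c * (v \<bullet> (H (x0 + s) *v v))" unfolding Q ca q1_def[symmetric] by (simp add: algebra_simps)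
  have "q1 * (c - a / 2) / c\<^sup>2 + (a * q1 / c\<^sup>2) / 2 \<le> integral {0..1} q"
  proof (rule int_lin_ge[OF qint])
    fix \<tau> :: real assume t: "\<tau> \<in> {0..1}"
    have "q1 - q \<tau> \<le> M * local_norm H x0 ((1 - \<tau>) *\<^sub>R s) * q \<tau>"
      unfolding q_def q1_def using ssc_inst[OF ssc, of v "x0 + s" "x0 + \<tau> *\<^sub>R s" x0 "x0 + \<tau> *\<^sub>R s"] by (simp only: dif)
    moreover have "\<bar>1 - \<tau>\<bar> = 1 - \<tau>" using t by simp
    ultimately have h: "q1 \<le> (1 + a * (1 - \<tau>)) * q \<tau>" unfolding ln_scale a_def r_def by (simp add: algebra_simps)
    define k where "k = c - a * (1/2 - \<tau>)"
    have k0: "k \<ge> 0" unfolding k_def ca using t a0 by (simp add: algebra_simps)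
    have "c\<^sup>2 - (1 + a * (1 - \<tau>)) * k = (a * (1/2 - \<tau>))\<^sup>2" unfolding k_def ca by (simp add: power2_eq_square algebra_simps)
    then have "(1 + a * (1 - \<tau>)) * k \<le> c\<^sup>2" by (smt (verit) zero_le_power2)
    from tangent_trick[OF ca a0 k0 qpos h this] have "q1 * k / c\<^sup>2 \<le> q \<tau>" .
    moreover have "q1 * k / c\<^sup>2 = q1 * (c - a / 2) / c\<^sup>2 + (a * q1 / c\<^sup>2) * \<tau>"
      unfolding k_def using c0 by (simp add: field_simps)
    ultimately show "q1 * (c - a / 2) / c\<^sup>2 + (a * q1 / c\<^sup>2) * \<tau> \<le> q \<tau>" by simp
  qed
  moreover have "q1 * (c - a / 2) / c\<^sup>2 + (a * q1 / c\<^sup>2) / 2 = q1 / c" using c0 by (simp add: field_simps power2_eq_square)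
  ultimately have "q1 / c \<le> integral {0..1} q" by simp
  then show "v \<bullet> (H (x0 + s) *v v) \<le> c * (v \<bullet> (J *v v))" unfolding Q q1_def[symmetric] using c0 by (simp add: divide_le_eq mult.commute)
qed

lemma one_le_mult2: "1 \<le> (a::real) \<Longrightarrow> 1 \<le> b \<Longrightarrow> 1 \<le> a * b"
  using mult_mono[of 1 a 1 b] by simp

lemma matrix_inv_right:
  fixes A :: "real^'n^'n"
  assumes "invertible A"
  shows "A ** matrix_inv A = mat 1"
  using someI_ex[OF assms[unfolded invertible_def]] unfolding matrix_inv_def by blast

lemma pd_invertible:
  fixes A :: "real^'n^'n"
  assumes "\<And>v. v \<noteq> 0 \<Longrightarrow> v \<bullet> (A *v v) > 0"
  shows "invertible A"
proof -
  have "\<forall>x. A *v x = 0 \<longrightarrow> x = 0" using assms by force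
  then have "\<exists>B. B ** A = mat 1" using matrix_left_invertible_ker by blast
  then show ?thesis using invertible_left_inverse by blast
qed

lemma c4_le_exp:
  fixes a :: real
  assumes "a \<ge> 0"
  shows "(1 + a / 2) ^ 4 \<le> exp (2 * a)"
proof -
  have "(1 + a / 2) ^ 4 \<le> exp (a / 2) ^ 4" using assms by (intro power_mono exp_ge_add_one_self) auto
  also have "\<dots> = exp (of_nat 4 * (a / 2))" by (rule exp_of_nat_mult[symmetric])
  finally show ?thesis by simp
qed

theorem mainTheorem4:
  fixes f :: "real^'n \<Rightarrow> real"
    and g :: "real^'n \<Rightarrow> real^'n"
    and H :: "real^'n \<Rightarrow> real^'n^'n"
    and \<mu> L M :: real
    and x :: "nat \<Rightarrow> real^'n"
    and G :: "nat \<Rightarrow> real^'n^'n"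
    and ui :: "nat \<Rightarrow> 'n"
    and t :: nat
  assumes grad: "\<And>y. GDERIV f y :> g y"
    and hess: "\<And>y. (g has_derivative (\<lambda>h. H y *v h)) (at y)"
    and mu_pos: "0 < \<mu>" and mu_le_L: "\<mu> \<le> L" and M_pos: "0 < M"
    and sconv: "strongly_convex_with \<mu> f"
    and lip: "L-lipschitz_on UNIV g"
    and ssc: "strongly_self_concordant M H"
    and G0: "G 0 = L *\<^sub>R mat 1"
    and step: "\<And>k. x (Suc k) = x k - matrix_inv (G k) *v g (x k)"
    and greedy: "\<And>k. greedy_index (H (x (Suc k)))
        ((1 + M * local_norm H (x k) (x (Suc k) - x k) / 2)\<^sup>2 *\<^sub>R
           BFGS (integral {0..1} (\<lambda>\<tau>. H (x k + \<tau> *\<^sub>R (x (Suc k) - x k))))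
                (G k) (x (Suc k) - x k)) (ui k)"
    and update: "\<And>k. G (Suc k) = BFGS (H (x (Suc k)))
        ((1 + M * local_norm H (x k) (x (Suc k) - x k) / 2)\<^sup>2 *\<^sub>R
           BFGS (integral {0..1} (\<lambda>\<tau>. H (x k + \<tau> *\<^sub>R (x (Suc k) - x k))))
                (G k) (x (Suc k) - x k))
        (axis (ui k) 1)"
    and nonzero: "\<And>k. k < t \<Longrightarrow> g (x k) \<noteq> 0"
  shows "loewner_le (H (x t)) (G t) \<and>
         loewner_le (G t)
           ((exp (2 * M * (\<Sum>i<t. local_norm H (x i) (x (Suc i) - x i))) * (L / \<mu>))
              *\<^sub>R H (x t))"
proof -
  have symH: "\<And>y. transpose (H y) = H y" by (rule hess_transpose[OF grad hess])
  have lowH: "\<And>y v. \<mu> * (norm v)\<^sup>2 \<le> v \<bullet> (H y *v v)" by (rule hess_lower[OF grad hess sconv])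
  have upH: "\<And>y v. v \<bullet> (H y *v v) \<le> L * (norm v)\<^sup>2" by (rule hess_upper_qf[OF hess lip])
  have psd: "\<And>y v. 0 \<le> v \<bullet> (H y *v v)" using lowH mu_pos by (smt (verit) mult_nonneg_nonneg zero_le_power2)
  have pd: "\<And>y v. v \<noteq> 0 \<Longrightarrow> 0 < v \<bullet> (H y *v v)"
  proof -
    fix y and v :: "real^'n" assume "v \<noteq> 0"
    then have "0 < \<mu> * (norm v)\<^sup>2" using mu_pos by simp
    then show "0 < v \<bullet> (H y *v v)" using lowH[of v y] by linarith
  qed
  have M0: "M \<ge> 0" using M_pos by simp
  define r where "r k = local_norm H (x k) (x (Suc k) - x k)" for k
  define c where "c k = 1 + M * r k / 2" for k
  define E where "E k = exp (2 * M * (\<Sum>i<k. r i)) * (L / \<mu>)" for k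
  have r0: "r k \<ge> 0" for k unfolding r_def local_norm_def using psd by simp
  have c1: "c k \<ge> 1" for k unfolding c_def using r0[of k] M0 by simp
  have E1: "E k \<ge> 1" for k
  proof -
    have "(\<Sum>i<k. r i) \<ge> 0" using r0 by (simp add: sum_nonneg)
    then have "exp (2 * M * (\<Sum>i<k. r i)) \<ge> 1" using M0 by simp
    moreover have "L / \<mu> \<ge> 1" using mu_pos mu_le_L by simp
    ultimately show ?thesis unfolding E_def by (rule one_le_mult2)
  qed
  have ESuc: "E (Suc k) = E k * exp (2 * M * r k)" for k
    unfolding E_def by (simp add: distrib_left exp_add)
  have "k \<le> t \<longrightarrow> transpose (G k) = G k \<and> (\<forall>v. v \<bullet> (H (x k) *v v) \<le> v \<bullet> (G k *v v))
      \<and> (\<forall>v. v \<bullet> (G k *v v) \<le> E k * (v \<bullet> (H (x k) *v v)))" for k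
  proof (induction k)
    case 0
    have qG: "v \<bullet> (G 0 *v v) = L * (norm v)\<^sup>2" for v
      unfolding G0 by (simp add: scaleR_matrix_vector_assoc[symmetric] power2_norm_eq_inner)
    have "L * (norm v)\<^sup>2 \<le> (L / \<mu>) * (v \<bullet> (H y *v v))" for v y
    proof -
      have "L * (norm v)\<^sup>2 = (L / \<mu>) * (\<mu> * (norm v)\<^sup>2)" using mu_pos by simp
      also have "\<dots> \<le> (L / \<mu>) * (v \<bullet> (H y *v v))" using mu_pos mu_le_L lowH by (intro mult_left_mono) auto
      finally show ?thesis .
    qed
    then show ?case using upH unfolding qG E_def by (simp add: G0 transpose_scalar)
  next
    case (Suc k)
    show ?case
    proof
      assume kt: "Suc k \<le> t"
      then obtain sG: "transpose (G k) = G k" and loG: "\<And>v. v \<bullet> (H (x k) *v v) \<le> v \<bullet> (G k *v v)"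
        and upG: "\<And>v. v \<bullet> (G k *v v) \<le> E k * (v \<bullet> (H (x k) *v v))" using Suc.IH by auto
      define s where "s = x (Suc k) - x k"
      define J where "J = integral {0..1} (\<lambda>\<tau>. H (x k + \<tau> *\<^sub>R s))"
      have xs: "x k + s = x (Suc k)" unfolding s_def by simp
      have ck: "c k = 1 + M * local_norm H (x k) s / 2" unfolding c_def r_def s_def ..
      have b1: "\<And>v. v \<bullet> (J *v v) \<le> c k * (v \<bullet> (H (x k) *v v))"
        unfolding J_def ck by (rule seg_bounds(1)[OF ssc M0 psd symH])
      have b2: "\<And>v. v \<bullet> (H (x k) *v v) \<le> c k * (v \<bullet> (J *v v))"
        unfolding J_def ck by (rule seg_bounds(2)[OF ssc M0 psd symH])
      have b3: "\<And>v. v \<bullet> (J *v v) \<le> c k * (v \<bullet> (H (x (Suc k)) *v v))"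
        unfolding J_def ck xs[symmetric] by (rule seg_bounds(3)[OF ssc M0 psd symH])
      have b4: "\<And>v. v \<bullet> (H (x (Suc k)) *v v) \<le> c k * (v \<bullet> (J *v v))"
        unfolding J_def ck xs[symmetric] by (rule seg_bounds(4)[OF ssc M0 psd symH])
      have sJ: "transpose J = J" unfolding J_def by (rule J_facts(2)[OF ssc M0 psd symH])
      have invG: "invertible (G k)"
        by (rule pd_invertible) (use pd loG in \<open>fastforce intro: less_le_trans\<close>)
      have "g (x k) \<noteq> 0" using nonzero kt by simp
      moreover have "G k *v (matrix_inv (G k) *v g (x k)) = g (x k)"
        by (simp add: matrix_vector_mul_assoc matrix_inv_right[OF invG])
      ultimately have "matrix_inv (G k) *v g (x k) \<noteq> 0" by auto
      then have s0: "s \<noteq> 0" unfolding s_def using step[of k] by simp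
      have pHs: "0 < s \<bullet> (H (x k) *v s)" using pd s0 by blast
      have cpos: "c k > 0" using c1[of k] by simp
      have pJ: "0 < s \<bullet> (J *v s)"
      proof -
        have "0 < c k * (s \<bullet> (J *v s))" using pHs b2[of s] by linarith
        then show ?thesis using cpos by (simp add: zero_less_mult_iff)
      qed
      have pGs: "0 < s \<bullet> (G k *v s)" using pHs loG[of s] by linarith
      define B where "B = BFGS J (G k) s"
      have Blo: "\<And>v. v \<bullet> (J *v v) \<le> c k * (v \<bullet> (B *v v))"
        unfolding B_def
      proof (rule BFGS_bounds(1)[OF sJ sG pJ pGs c1])
        show "1 \<le> E k * c k" using E1 c1 by (rule one_le_mult2)
        fix v show "v \<bullet> (J *v v) \<le> c k * (v \<bullet> (G k *v v))" using b1[of v] loG[of v] cpos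
          by (smt (verit) mult_left_mono)
        show "v \<bullet> (G k *v v) \<le> E k * c k * (v \<bullet> (J *v v))" using upG[of v] b2[of v] E1[of k]
          by (smt (verit) mult.assoc mult_left_mono)
      qed
      have Bup: "\<And>v. v \<bullet> (B *v v) \<le> E k * c k * (v \<bullet> (J *v v))"
        unfolding B_def
      proof (rule BFGS_bounds(2)[OF sJ sG pJ pGs c1])
        show "1 \<le> E k * c k" using E1 c1 by (rule one_le_mult2)
        fix v show "v \<bullet> (J *v v) \<le> c k * (v \<bullet> (G k *v v))" using b1[of v] loG[of v] cpos
          by (smt (verit) mult_left_mono)
        show "v \<bullet> (G k *v v) \<le> E k * c k * (v \<bullet> (J *v v))" using upG[of v] b2[of v] E1[of k]
          by (smt (verit) mult.assoc mult_left_mono)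
      qed
      define Gh where "Gh = (c k)\<^sup>2 *\<^sub>R B"
      have qGh: "v \<bullet> (Gh *v v) = (c k)\<^sup>2 * (v \<bullet> (B *v v))" for v
        unfolding Gh_def by (simp add: scaleR_matrix_vector_assoc[symmetric])
      have sB: "transpose B = B" unfolding B_def by (rule BFGS_sym[OF sJ sG])
      have sGh: "transpose Gh = Gh" unfolding Gh_def by (simp add: transpose_scalar sB)
      define e where "e = (axis (ui k) 1 :: real^'n)"
      have e0: "e \<noteq> 0" unfolding e_def by (simp add: axis_eq_0_iff)
      have pHe: "0 < e \<bullet> (H (x (Suc k)) *v e)" using pd e0 by blast
      have loGh: "\<And>v. v \<bullet> (H (x (Suc k)) *v v) \<le> 1 * (v \<bullet> (Gh *v v))"
      proof -
        fix v
        have "v \<bullet> (H (x (Suc k)) *v v) \<le> c k * (v \<bullet> (J *v v))" by (rule b4)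
        also have "\<dots> \<le> c k * (c k * (v \<bullet> (B *v v)))" using Blo[of v] cpos by (simp add: mult_left_mono)
        finally show "v \<bullet> (H (x (Suc k)) *v v) \<le> 1 * (v \<bullet> (Gh *v v))" unfolding qGh by (simp add: power2_eq_square mult.assoc)
      qed
      have upGh: "\<And>v. v \<bullet> (Gh *v v) \<le> (E k * (c k)^4) * (v \<bullet> (H (x (Suc k)) *v v))"
      proof -
        fix v
        have "E k \<ge> 0" using E1[of k] by linarith
        then have Ec: "E k * c k \<ge> 0" using cpos by simp
        have "v \<bullet> (Gh *v v) = (c k)\<^sup>2 * (v \<bullet> (B *v v))" by (rule qGh)
        also have "\<dots> \<le> (c k)\<^sup>2 * (E k * c k * (v \<bullet> (J *v v)))" using Bup[of v] by (simp add: mult_left_mono)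
        also have "\<dots> \<le> (c k)\<^sup>2 * (E k * c k * (c k * (v \<bullet> (H (x (Suc k)) *v v))))"
          using b3[of v] Ec by (intro mult_left_mono) auto
        also have "\<dots> = (E k * (c k)^4) * (v \<bullet> (H (x (Suc k)) *v v))" by (simp add: power2_eq_square power4_eq_xxxx)
        finally show "v \<bullet> (Gh *v v) \<le> (E k * (c k)^4) * (v \<bullet> (H (x (Suc k)) *v v))" .
      qed
      have pGhe: "0 < e \<bullet> (Gh *v e)" using pHe loGh[of e] by linarith
      have Gsuc: "G (Suc k) = BFGS (H (x (Suc k))) Gh e"
        unfolding update[of k] Gh_def B_def J_def s_def e_def c_def r_def ..
      have E4: "1 \<le> E k * (c k)^4" using E1[of k] c1[of k]
        by (intro one_le_mult2 one_le_power)
      have R1: "\<And>v. v \<bullet> (H (x (Suc k)) *v v) \<le> 1 * (v \<bullet> (G (Suc k) *v v))"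
        unfolding Gsuc by (rule BFGS_bounds(1)[OF symH sGh pHe pGhe order_refl E4 loGh upGh])
      have R2: "\<And>v. v \<bullet> (G (Suc k) *v v) \<le> (E k * (c k)^4) * (v \<bullet> (H (x (Suc k)) *v v))"
        unfolding Gsuc by (rule BFGS_bounds(2)[OF symH sGh pHe pGhe order_refl E4 loGh upGh])
      have c4: "(c k)^4 \<le> exp (2 * M * r k)"
        using c4_le_exp[of "M * r k"] M0 r0[of k] unfolding c_def by (simp add: mult.assoc)
      have R3: "v \<bullet> (G (Suc k) *v v) \<le> E (Suc k) * (v \<bullet> (H (x (Suc k)) *v v))" for v
      proof -
        have "E k * (c k)^4 \<le> E (Suc k)" unfolding ESuc using c4 E1[of k] by (simp add: mult_left_mono)
        then show ?thesis using R2[of v] psd[of v "x (Suc k)"] by (smt (verit) mult_right_mono)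
      qed
      show "transpose (G (Suc k)) = G (Suc k) \<and> (\<forall>v. v \<bullet> (H (x (Suc k)) *v v) \<le> v \<bullet> (G (Suc k) *v v))
        \<and> (\<forall>v. v \<bullet> (G (Suc k) *v v) \<le> E (Suc k) * (v \<bullet> (H (x (Suc k)) *v v)))"
        using R1 R3 BFGS_sym[OF symH sGh] unfolding Gsuc by simp
    qed
  qed
  then have "(\<forall>v. v \<bullet> (H (x t) *v v) \<le> v \<bullet> (G t *v v)) \<and> (\<forall>v. v \<bullet> (G t *v v) \<le> E t * (v \<bullet> (H (x t) *v v)))"
    by blast
  then show ?thesis unfolding loewner_le_def E_def r_def
    by (simp add: scaleR_matrix_vector_assoc[symmetric])
qed

end
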